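(* Let $\gamma\ge0$ and $\alpha_i,\beta_i\ge0$ with $\gamma+\sum_i\alpha_i+\sum_i\beta_i=1$. The separation distance between the distribution of $k$ successive (independent) applications of an $(\vec{\alpha},\vec{\beta},\gamma)$ shuffle to an $n$-card deck and the uniform distribution on $S_n$ is at most \[ \binom{n}{2}\Big[\sum_i \alpha_i^2+\sum_i\beta_i^2\Big]^k .\]
   Context: An $(\vec{\alpha},\vec{\beta},\gamma)$ shuffle of $n$ cards is the random permutation $\pi$ of $\{1,\dots,n\}$ produced as follows. Choose a word of length $n$ of integers with independent letters, letter $i>0$ with probability $\alpha_i$, letter $-i$ ($i>0$) with probability $\beta_i$, letter $0$ with probability $\gamma$. Process the occurring letter values in increasing order of the integers, assigning consecutive blocks of $\{1,\dots,n\}$ starting from $1$: a negative value's block is written at its positions in decreasing order from left to right; the block of $0$ is written at its positions in uniformly random order; a positive value's block is written at its positions in increasing order from left to right. $\pi(p)$ is the integer at position $p$. The separation distance between a probability $P$ on $S_n$ and the uniform distribution $U$ is $\max_{\pi\in S_n}\big(1-\frac{P(\pi)}{U(\pi)}\big)$. *)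

theory Defs
  imports "HOL-Probability.Probability" "HOL-Combinatorics.Permutations"
begin

text \<open>Letters are integers. Letter i>0 has probability al i, letter -i (i>0) has
probability be i, letter 0 has probability ga. The values al 0, be 0 are irrelevant.\<close>

definition letter_pmf :: "(nat \<Rightarrow> real) \<Rightarrow> (nat \<Rightarrow> real) \<Rightarrow> real \<Rightarrow> int pmf" where
  "letter_pmf al be ga = embed_pmf (\<lambda>z::int.
     if z > 0 then al (nat z) else if z < 0 then be (nat (- z)) else ga)"

definition word_pmf :: "nat \<Rightarrow> (nat \<Rightarrow> real) \<Rightarrow> (nat \<Rightarrow> real) \<Rightarrow> real \<Rightarrow> (nat \<Rightarrow> int) pmf" where
  "word_pmf n al be ga = Pi_pmf {1..n} 0 (\<lambda>_. letter_pmf al be ga)"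

definition block_start :: "nat \<Rightarrow> (nat \<Rightarrow> int) \<Rightarrow> int \<Rightarrow> nat" where
  "block_start n w v = card {q \<in> {1..n}. w q < v}"

definition block_size :: "nat \<Rightarrow> (nat \<Rightarrow> int) \<Rightarrow> int \<Rightarrow> nat" where
  "block_size n w v = card {q \<in> {1..n}. w q = v}"

definition compatible_perms :: "nat \<Rightarrow> (nat \<Rightarrow> int) \<Rightarrow> (nat \<Rightarrow> nat) set" where
  "compatible_perms n w = {\<pi>. \<pi> permutes {1..n} \<and>
     (\<forall>p\<in>{1..n}. block_start n w (w p) < \<pi> p \<and>
                  \<pi> p \<le> block_start n w (w p) + block_size n w (w p)) \<and>
     (\<forall>p\<in>{1..n}. \<forall>q\<in>{1..n}. p < q \<and> w p = w q \<and> w p > 0 \<longrightarrow> \<pi> p < \<pi> q) \<and>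
     (\<forall>p\<in>{1..n}. \<forall>q\<in>{1..n}. p < q \<and> w p = w q \<and> w p < 0 \<longrightarrow> \<pi> p > \<pi> q)}"

text \<open>One (al, be, ga) shuffle of n cards: pi p is the integer at position p;
the 0-block is written in uniformly random order, i.e. pi is uniform among
the compatible arrangements.\<close>

definition shuffle_pmf :: "nat \<Rightarrow> (nat \<Rightarrow> real) \<Rightarrow> (nat \<Rightarrow> real) \<Rightarrow> real \<Rightarrow> (nat \<Rightarrow> nat) pmf" where
  "shuffle_pmf n al be ga =
     bind_pmf (word_pmf n al be ga) (\<lambda>w. pmf_of_set (compatible_perms n w))"

fun iter_shuffle_pmf :: "nat \<Rightarrow> (nat \<Rightarrow> real) \<Rightarrow> (nat \<Rightarrow> real) \<Rightarrow> real \<Rightarrow> nat \<Rightarrow> (nat \<Rightarrow> nat) pmf" where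
  "iter_shuffle_pmf n al be ga 0 = return_pmf id"
| "iter_shuffle_pmf n al be ga (Suc k) =
     bind_pmf (iter_shuffle_pmf n al be ga k)
       (\<lambda>\<sigma>. map_pmf (\<lambda>\<pi>. \<pi> \<circ> \<sigma>) (shuffle_pmf n al be ga))"

definition sep_dist :: "nat \<Rightarrow> (nat \<Rightarrow> nat) pmf \<Rightarrow> real" where
  "sep_dist n P = Max ((\<lambda>\<pi>. 1 - pmf P \<pi> / (1 / fact n)) ` {\<pi>. \<pi> permutes {1..n}})"

end

theory Submission
  imports Defs
begin

definition rank :: "('a \<Rightarrow> 'a \<Rightarrow> bool) \<Rightarrow> 'a set \<Rightarrow> 'a \<Rightarrow> nat" where
  "rank R S x = Suc (card {y\<in>S. R y x})"

definition sto :: "('a \<Rightarrow> 'a \<Rightarrow> bool) \<Rightarrow> 'a set \<Rightarrow> bool" where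
  "sto R S \<longleftrightarrow> (\<forall>x\<in>S. \<not> R x x) \<and> (\<forall>x\<in>S. \<forall>y\<in>S. \<forall>z\<in>S. R x y \<longrightarrow> R y z \<longrightarrow> R x z)
     \<and> (\<forall>x\<in>S. \<forall>y\<in>S. x \<noteq> y \<longrightarrow> R x y \<or> R y x)"

lemma sto_irrefl: "sto R S \<Longrightarrow> x \<in> S \<Longrightarrow> \<not> R x x" unfolding sto_def by metis
lemma sto_trans: "sto R S \<Longrightarrow> x \<in> S \<Longrightarrow> y \<in> S \<Longrightarrow> z \<in> S \<Longrightarrow> R x y \<Longrightarrow> R y z \<Longrightarrow> R x z" unfolding sto_def by metis
lemma sto_total: "sto R S \<Longrightarrow> x \<in> S \<Longrightarrow> y \<in> S \<Longrightarrow> x \<noteq> y \<Longrightarrow> R x y \<or> R y x" unfolding sto_def by metis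

lemma rank_mono:
  assumes "finite S" "sto R S" "x \<in> S" "y \<in> S" "R x y"
  shows "rank R S x < rank R S y"
proof -
  have tr: "\<And>z. z \<in> S \<Longrightarrow> R z x \<Longrightarrow> R z y" using assms sto_trans by metis
  have "\<not> R x x" using assms sto_irrefl by metis
  then have "{z\<in>S. R z x} \<subset> {z\<in>S. R z y}"
    using assms tr by auto
  then show ?thesis unfolding rank_def using assms(1)
    by (simp add: psubset_card_mono)
qed

lemma rank_less_iff:
  assumes "finite S" "sto R S" "x \<in> S" "y \<in> S"
  shows "rank R S x < rank R S y \<longleftrightarrow> R x y"
proof
  assume "R x y" then show "rank R S x < rank R S y" by (rule rank_mono[OF assms])
next
  assume a: "rank R S x < rank R S y"
  show "R x y"
  proof (rule ccontr)
    assume "\<not> R x y"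
    then have "x = y \<or> R y x" using assms sto_total by metis
    then show False
    proof
      assume "x = y" then show False using a by simp
    next
      assume "R y x" then have "rank R S y < rank R S x" by (rule rank_mono[OF assms(1,2,4,3)])
      then show False using a by simp
    qed
  qed
qed

lemma rank_range:
  assumes "finite S" "sto R S" "x \<in> S"
  shows "rank R S x \<in> {1..card S}"
proof -
  have "\<not> R x x" using assms sto_irrefl by metis
  then have "{z\<in>S. R z x} \<subset> S" using assms(3) by blast
  then have "card {z\<in>S. R z x} < card S" using assms(1) by (rule psubset_card_mono[rotated])
  then show ?thesis unfolding rank_def by simp
qed

lemma rank_inj:
  assumes "finite S" "sto R S"
  shows "inj_on (rank R S) S"
proof (rule inj_onI)
  fix x y assume "x \<in> S" "y \<in> S" "rank R S x = rank R S y"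
  moreover have "x \<noteq> y \<Longrightarrow> R x y \<or> R y x" using assms(2) \<open>x \<in> S\<close> \<open>y \<in> S\<close> sto_total by metis
  ultimately show "x = y"
  proof (cases "x = y")
    case False
    then have "R x y \<or> R y x" using \<open>x \<noteq> y \<Longrightarrow> _\<close> by blast
    then have "rank R S x \<noteq> rank R S y" using rank_mono[OF assms \<open>x \<in> S\<close> \<open>y \<in> S\<close>] rank_mono[OF assms \<open>y \<in> S\<close> \<open>x \<in> S\<close>] by (metis less_irrefl)
    then show ?thesis using \<open>rank R S x = rank R S y\<close> by simp
  qed
qed

definition rperm :: "nat \<Rightarrow> (nat \<Rightarrow> nat \<Rightarrow> bool) \<Rightarrow> nat \<Rightarrow> nat" where
  "rperm n R = (\<lambda>c. if c \<in> {1..n} then rank R {1..n} c else c)"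

lemma rperm_eq: "c \<in> {1..n} \<Longrightarrow> rperm n R c = rank R {1..n} c"
  by (simp add: rperm_def)

lemma rperm_out: "c \<notin> {1..n} \<Longrightarrow> rperm n R c = c"
  unfolding rperm_def by auto

lemma rperm_permutes:
  assumes "sto R {1..n}"
  shows "rperm n R permutes {1..n}"
proof (rule inj_imp_permutes)
  have "inj_on (rank R {1..n}) {1..n}" by (rule rank_inj[OF _ assms]) simp
  moreover have "inj_on (rperm n R) {1..n} = inj_on (rank R {1..n}) {1..n}"
    by (rule inj_on_cong) (rule rperm_eq)
  ultimately show "inj_on (rperm n R) {1..n}" by (simp only:)
  show "rperm n R x \<in> {1..n}" if "x \<in> {1..n}" for x
    using rank_range[OF _ assms that] rperm_eq[OF that] by simp
  show "rperm n R x = x" if "x \<notin> {1..n}" for x using that by (rule rperm_out)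
qed simp

lemma rperm_less_iff:
  assumes "sto R {1..n}" "x \<in> {1..n}" "y \<in> {1..n}"
  shows "rperm n R x < rperm n R y \<longleftrightarrow> R x y"
  using rank_less_iff[OF _ assms] by (simp add: rperm_eq[OF assms(2)] rperm_eq[OF assms(3)])

lemma perm_card_less:
  fixes p :: "nat \<Rightarrow> nat"
  assumes "p permutes {1..n}" "c \<in> {1..n}"
  shows "card {q\<in>{1..n}. p q < p c} = p c - 1"
proof -
  have "p ` {q\<in>{1..n}. p q < p c} = {v\<in>{1..n}. v < p c}"
  proof -
    have im: "p ` {1..n} = {1..n}" using assms(1) by (rule permutes_image)
    show ?thesis
    proof (rule set_eqI, rule iffI)
      fix x assume "x \<in> p ` {q\<in>{1..n}. p q < p c}"
      then show "x \<in> {v\<in>{1..n}. v < p c}" using im by blast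
    next
      fix x assume x: "x \<in> {v\<in>{1..n}. v < p c}"
      then have "x \<in> p ` {1..n}" using im by simp
      then obtain q where "q \<in> {1..n}" "x = p q" by blast
      then show "x \<in> p ` {q\<in>{1..n}. p q < p c}" using x by blast
    qed
  qed
  moreover have "inj_on p {q\<in>{1..n}. p q < p c}"
    by (rule permutes_inj_on[OF assms(1)])
  moreover have "p c \<in> {1..n}" using permutes_in_image[OF assms(1)] assms(2) by simp
  moreover have "{v\<in>{1..n::nat}. v < p c} = {1..<p c}" using \<open>p c \<in> {1..n}\<close> by auto
  ultimately have "card {q\<in>{1..n}. p q < p c} = card {1..<p c}"
    using card_image by metis
  then show ?thesis by simp
qed

lemma perm_eq_rperm:
  assumes "p permutes {1..n}" "sto R {1..n}"
    and "\<And>x y. x \<in> {1..n} \<Longrightarrow> y \<in> {1..n} \<Longrightarrow> R x y \<longleftrightarrow> p x < p y"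
  shows "p = rperm n R"
proof
  fix c
  show "p c = rperm n R c"
  proof (cases "c \<in> {1..n}")
    case True
    have "{y\<in>{1..n}. R y c} = {q\<in>{1..n}. p q < p c}"
    proof (rule Collect_cong)
      fix y show "(y \<in> {1..n} \<and> R y c) = (y \<in> {1..n} \<and> p y < p c)"
        using assms(3)[of y c] True by blast
    qed
    moreover have "p c \<in> {1..n}" using permutes_in_image[OF assms(1)] True by simp
    ultimately have "rank R {1..n} c = p c" using perm_card_less[OF assms(1) True]
      unfolding rank_def by simp
    then show ?thesis using rperm_eq[OF True] by simp
  next
    case False then show ?thesis using permutes_not_in[OF assms(1) False] rperm_out[OF False] by simp
  qed
qed

lemma perm_eq_by_order:
  fixes p q :: "nat \<Rightarrow> nat"
  assumes "p permutes {1..n}" "q permutes {1..n}"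
    and "\<And>x y. x \<in> {1..n} \<Longrightarrow> y \<in> {1..n} \<Longrightarrow> p x < p y \<longleftrightarrow> q x < q y"
  shows "p = q"
proof -
  have inj: "inj_on p {1..n}" by (rule permutes_inj_on[OF assms(1)])
  have s: "sto (\<lambda>x y. p x < p y) {1..n}"
    unfolding sto_def
  proof (intro conjI ballI impI)
    fix x y assume "x \<in> {1..n}" "y \<in> {1..n}" "x \<noteq> y"
    then have "p x \<noteq> p y" using inj unfolding inj_on_def by blast
    then show "p x < p y \<or> p y < p x" by (simp add: linorder_neq_iff)
  qed auto
  have "p = rperm n (\<lambda>x y. p x < p y)" by (rule perm_eq_rperm[OF assms(1) s]) auto
  moreover have "q = rperm n (\<lambda>x y. p x < p y)" by (rule perm_eq_rperm[OF assms(2) s]) (use assms(3) in auto)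
  ultimately show ?thesis by simp
qed


definition cmpG :: "(nat \<Rightarrow> int) \<Rightarrow> (nat \<times> nat) set \<Rightarrow> (nat \<Rightarrow> nat) \<Rightarrow> nat \<Rightarrow> nat \<Rightarrow> bool" where
  "cmpG l Q s d c \<longleftrightarrow> l d < l c \<or> (l d = l c \<and> ((l c > 0 \<and> s d < s c) \<or> (l c < 0 \<and> s c < s d) \<or> (l c = 0 \<and> (d, c) \<in> Q)))"

definition Zs :: "nat \<Rightarrow> (nat \<Rightarrow> int) \<Rightarrow> nat set" where
  "Zs n l = {p\<in>{1..n}. l p = 0}"

definition LO :: "nat set \<Rightarrow> (nat \<times> nat) set set" where
  "LO Z = {Q. Q \<subseteq> Z \<times> Z \<and> (\<forall>x. (x, x) \<notin> Q) \<and> (\<forall>x y z. (x, y) \<in> Q \<longrightarrow> (y, z) \<in> Q \<longrightarrow> (x, z) \<in> Q)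
      \<and> (\<forall>x\<in>Z. \<forall>y\<in>Z. x \<noteq> y \<longrightarrow> (x, y) \<in> Q \<or> (y, x) \<in> Q)}"

definition stp :: "nat \<Rightarrow> (nat \<Rightarrow> int) \<times> (nat \<times> nat) set \<Rightarrow> (nat \<Rightarrow> nat) \<Rightarrow> nat \<Rightarrow> nat" where
  "stp n d s = rperm n (cmpG (fst d) (snd d) s)"

definition valid :: "nat \<Rightarrow> (nat \<Rightarrow> int) \<times> (nat \<times> nat) set \<Rightarrow> bool" where
  "valid n d \<longleftrightarrow> snd d \<in> LO (Zs n (fst d))"

lemma LO_D:
  assumes "Q \<in> LO (Zs n l)"
  shows "\<And>x y. (x, y) \<in> Q \<Longrightarrow> x \<in> {1..n} \<and> y \<in> {1..n} \<and> l x = 0 \<and> l y = 0"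
    and "\<And>x. (x, x) \<notin> Q"
    and "\<And>x y z. (x, y) \<in> Q \<Longrightarrow> (y, z) \<in> Q \<Longrightarrow> (x, z) \<in> Q"
    and "\<And>x y. x \<in> {1..n} \<Longrightarrow> y \<in> {1..n} \<Longrightarrow> l x = 0 \<Longrightarrow> l y = 0 \<Longrightarrow> x \<noteq> y \<Longrightarrow> (x, y) \<in> Q \<or> (y, x) \<in> Q"
  using assms unfolding LO_def Zs_def by (auto dest!: subsetD)

lemma sto_cmpG:
  assumes "inj_on s {1..n}" "Q \<in> LO (Zs n l)"
  shows "sto (cmpG l Q s) {1..n}"
  unfolding sto_def
proof (intro conjI ballI impI)
  fix x assume "x \<in> {1..n}"
  show "\<not> cmpG l Q s x x" unfolding cmpG_def using LO_D(2)[OF assms(2)] by auto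
next
  fix x y z assume "x \<in> {1..n}" "y \<in> {1..n}" "z \<in> {1..n}" "cmpG l Q s x y" "cmpG l Q s y z"
  moreover have "(x, y) \<in> Q \<longrightarrow> (y, z) \<in> Q \<longrightarrow> (x, z) \<in> Q" using LO_D(3)[OF assms(2), of x y z] by blast
  ultimately show "cmpG l Q s x z" unfolding cmpG_def
    by auto
next
  fix x y assume xy: "x \<in> {1..n}" "y \<in> {1..n}" "x \<noteq> y"
  then have "s x \<noteq> s y" using assms(1) unfolding inj_on_def by blast
  then show "cmpG l Q s x y \<or> cmpG l Q s y x" unfolding cmpG_def
    using LO_D(4)[OF assms(2) xy(1,2) _ _ xy(3)] by (smt (verit, best) linorder_neq_iff)
qed

lemma stp_permutes:
  assumes "valid n d" "s permutes {1..n}"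
  shows "stp n d s permutes {1..n}"
  unfolding stp_def
  by (rule rperm_permutes, rule sto_cmpG) (use assms in \<open>auto simp: valid_def permutes_inj_on\<close>)

lemma stp_less_iff:
  assumes "valid n d" "s permutes {1..n}" "x \<in> {1..n}" "y \<in> {1..n}"
  shows "stp n d s x < stp n d s y \<longleftrightarrow> cmpG (fst d) (snd d) s x y"
proof -
  have "sto (cmpG (fst d) (snd d) s) {1..n}"
    by (rule sto_cmpG) (use assms in \<open>auto simp: valid_def permutes_inj_on\<close>)
  then show ?thesis unfolding stp_def by (rule rperm_less_iff[OF _ assms(3,4)])
qed

lemma stp_out: "x \<notin> {1..n} \<Longrightarrow> stp n d s x = x"
  unfolding stp_def by (rule rperm_out)


definition Zord :: "nat \<Rightarrow> (nat \<Rightarrow> int) \<Rightarrow> (nat \<Rightarrow> nat) \<Rightarrow> (nat \<times> nat) set" where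
  "Zord n w p = {(x, y). x \<in> {1..n} \<and> y \<in> {1..n} \<and> w x = 0 \<and> w y = 0 \<and> p x < p y}"

lemma Zord_LO:
  assumes "inj_on p {1..n}"
  shows "Zord n w p \<in> LO (Zs n w)"
proof -
  have "p x \<noteq> p y" if "x \<in> {1..n}" "y \<in> {1..n}" "x \<noteq> y" for x y
    using assms that unfolding inj_on_def by blast
  then show ?thesis unfolding LO_def Zord_def Zs_def
    by (auto simp: linorder_neq_iff)
qed

lemma block_le:
  assumes "w q < w p"
  shows "block_start n w (w q) + block_size n w (w q) \<le> block_start n w (w p)"
proof -
  have "block_start n w (w q) + block_size n w (w q) = card ({r\<in>{1..n}. w r < w q} \<union> {r\<in>{1..n}. w r = w q})"
    unfolding block_start_def block_size_def by (rule card_Un_disjoint[symmetric]) auto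
  also have "\<dots> \<le> card {r\<in>{1..n}. w r < w p}"
    by (rule card_mono) (use assms in auto)
  finally show ?thesis unfolding block_start_def .
qed

lemma compat_order:
  assumes "p \<in> compatible_perms n w" "x \<in> {1..n}" "y \<in> {1..n}" "cmpG w (Zord n w p) id x y"
  shows "p x < p y"
proof -
  have B: "\<And>z. z \<in> {1..n} \<Longrightarrow> block_start n w (w z) < p z \<and> p z \<le> block_start n w (w z) + block_size n w (w z)"
    and P: "\<And>a b. a \<in> {1..n} \<Longrightarrow> b \<in> {1..n} \<Longrightarrow> a < b \<Longrightarrow> w a = w b \<Longrightarrow> w a > 0 \<Longrightarrow> p a < p b"
    and N: "\<And>a b. a \<in> {1..n} \<Longrightarrow> b \<in> {1..n} \<Longrightarrow> a < b \<Longrightarrow> w a = w b \<Longrightarrow> w a < 0 \<Longrightarrow> p a > p b"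
    using assms(1) unfolding compatible_perms_def by blast+
  consider "w x < w y" | "w x = w y" "w y > 0" "x < y" | "w x = w y" "w y < 0" "y < x" | "w x = w y" "w y = 0" "(x, y) \<in> Zord n w p"
    using assms(4) unfolding cmpG_def by auto
  then show ?thesis
  proof cases
    case 1
    have "p x \<le> block_start n w (w x) + block_size n w (w x)" using B[OF assms(2)] by blast
    also have "\<dots> \<le> block_start n w (w y)" by (rule block_le) (use 1 in simp)
    also have "\<dots> < p y" using B[OF assms(3)] by blast
    finally show ?thesis .
  next
    case 2 then show ?thesis using P[OF assms(2,3)] by simp
  next
    case 3 then show ?thesis using N[OF assms(3,2)] by simp
  next
    case 4 then show ?thesis unfolding Zord_def by simp
  qed
qed

lemma compat_permutes: "p \<in> compatible_perms n w \<Longrightarrow> p permutes {1..n}"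
  unfolding compatible_perms_def by blast

lemma compat_eq_stp:
  assumes "p \<in> compatible_perms n w"
  shows "p = stp n (w, Zord n w p) id"
proof -
  have perm: "p permutes {1..n}" using assms by (rule compat_permutes)
  have LOZ: "Zord n w p \<in> LO (Zs n w)" by (rule Zord_LO[OF permutes_inj_on[OF perm]])
  have S: "sto (cmpG w (Zord n w p) id) {1..n}" by (rule sto_cmpG[OF _ LOZ]) simp
  show ?thesis unfolding stp_def fst_conv snd_conv
  proof (rule perm_eq_rperm[OF perm S])
    fix x y assume xy: "x \<in> {1..n}" "y \<in> {1..n}"
    show "cmpG w (Zord n w p) id x y \<longleftrightarrow> p x < p y"
    proof
      assume "cmpG w (Zord n w p) id x y" then show "p x < p y" by (rule compat_order[OF assms xy])
    next
      assume a: "p x < p y"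
      show "cmpG w (Zord n w p) id x y"
      proof (rule ccontr)
        assume na: "\<not> cmpG w (Zord n w p) id x y"
        have "x \<noteq> y" using a by auto
        then have "cmpG w (Zord n w p) id y x" using sto_total[OF S xy] na by blast
        then have "p y < p x" by (rule compat_order[OF assms xy(2,1)])
        then show False using a by simp
      qed
    qed
  qed
qed

lemma stp_compat:
  assumes "Q \<in> LO (Zs n w)"
  shows "stp n (w, Q) id \<in> compatible_perms n w"
proof -
  let ?R = "cmpG w Q id"
  let ?p = "stp n (w, Q) id"
  have S: "sto ?R {1..n}" by (rule sto_cmpG[OF _ assms]) simp
  have perm: "?p permutes {1..n}" unfolding stp_def fst_conv snd_conv by (rule rperm_permutes[OF S])
  have less: "?p x < ?p y \<longleftrightarrow> ?R x y" if "x \<in> {1..n}" "y \<in> {1..n}" for x y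
    unfolding stp_def fst_conv snd_conv by (rule rperm_less_iff[OF S that])
  have val: "?p x = Suc (card {y\<in>{1..n}. ?R y x})" if "x \<in> {1..n}" for x
    unfolding stp_def fst_conv snd_conv rperm_eq[OF that] rank_def ..
  have bounds: "block_start n w (w x) < ?p x \<and> ?p x \<le> block_start n w (w x) + block_size n w (w x)"
    if x: "x \<in> {1..n}" for x
  proof
    have "{q\<in>{1..n}. w q < w x} \<subseteq> {y\<in>{1..n}. ?R y x}" unfolding cmpG_def by auto
    then have "card {q\<in>{1..n}. w q < w x} \<le> card {y\<in>{1..n}. ?R y x}" by (intro card_mono) auto
    then show "block_start n w (w x) < ?p x" unfolding val[OF x] block_start_def by simp
  next
    have irr: "\<not> ?R x x" by (rule sto_irrefl[OF S x])
    have "{y\<in>{1..n}. ?R y x} \<subseteq> ({q\<in>{1..n}. w q < w x} \<union> {q\<in>{1..n}. w q = w x}) - {x}"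
      using irr unfolding cmpG_def by auto
    then have "card {y\<in>{1..n}. ?R y x} \<le> card (({q\<in>{1..n}. w q < w x} \<union> {q\<in>{1..n}. w q = w x}) - {x})"
      by (intro card_mono) auto
    also have "\<dots> = card ({q\<in>{1..n}. w q < w x} \<union> {q\<in>{1..n}. w q = w x}) - 1"
      using x by (subst card_Diff_singleton) auto
    also have "card ({q\<in>{1..n}. w q < w x} \<union> {q\<in>{1..n}. w q = w x}) = block_start n w (w x) + block_size n w (w x)"
      unfolding block_start_def block_size_def by (rule card_Un_disjoint) auto
    finally have le: "card {y\<in>{1..n}. ?R y x} \<le> block_start n w (w x) + block_size n w (w x) - 1" .
    have "x \<in> {q\<in>{1..n}. w q = w x}" using x by simp
    then have ne: "{q\<in>{1..n}. w q = w x} \<noteq> {}" by blast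
    have "card {q\<in>{1..n}. w q = w x} > 0"
      by (rule iffD2[OF card_gt_0_iff], rule conjI[OF ne]) simp
    then have "block_size n w (w x) \<ge> 1" unfolding block_size_def by simp
    then show "?p x \<le> block_start n w (w x) + block_size n w (w x)" unfolding val[OF x] using le by simp
  qed
  show ?thesis unfolding compatible_perms_def
  proof (intro CollectI conjI ballI impI perm)
    fix x assume "x \<in> {1..n}" then show "block_start n w (w x) < ?p x" using bounds by blast
  next
    fix x assume "x \<in> {1..n}" then show "?p x \<le> block_start n w (w x) + block_size n w (w x)" using bounds by blast
  next
    fix x y assume xy: "x \<in> {1..n}" "y \<in> {1..n}" and c: "x < y \<and> w x = w y \<and> 0 < w x"
    then have "?R x y" unfolding cmpG_def by auto
    then show "?p x < ?p y" using less[OF xy] by blast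
  next
    fix x y assume xy: "x \<in> {1..n}" "y \<in> {1..n}" and c: "x < y \<and> w x = w y \<and> w x < 0"
    then have "?R y x" unfolding cmpG_def by auto
    then show "?p x > ?p y" using less[OF xy(2,1)] by blast
  qed
qed

lemma Zord_stp:
  assumes "Q \<in> LO (Zs n w)"
  shows "Zord n w (stp n (w, Q) id) = Q"
proof -
  let ?R = "cmpG w Q id"
  have S: "sto ?R {1..n}" by (rule sto_cmpG[OF _ assms]) simp
  have less: "stp n (w, Q) id x < stp n (w, Q) id y \<longleftrightarrow> ?R x y" if "x \<in> {1..n}" "y \<in> {1..n}" for x y
    unfolding stp_def fst_conv snd_conv by (rule rperm_less_iff[OF S that])
  show ?thesis
  proof (rule set_eqI)
    fix z :: "nat \<times> nat"
    obtain x y where z: "z = (x, y)" by (cases z)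
    have "(x, y) \<in> Zord n w (stp n (w, Q) id) \<longleftrightarrow> (x, y) \<in> Q"
    proof
      assume "(x, y) \<in> Zord n w (stp n (w, Q) id)"
      then have xy: "x \<in> {1..n}" "y \<in> {1..n}" "w x = 0" "w y = 0" "stp n (w, Q) id x < stp n (w, Q) id y"
        unfolding Zord_def by auto
      then have "?R x y" using less by blast
      then show "(x, y) \<in> Q" using xy unfolding cmpG_def by auto
    next
      assume q: "(x, y) \<in> Q"
      then have xy: "x \<in> {1..n}" "y \<in> {1..n}" "w x = 0" "w y = 0" using LO_D(1)[OF assms] by blast+
      then have "?R x y" using q unfolding cmpG_def by auto
      then show "(x, y) \<in> Zord n w (stp n (w, Q) id)" using xy less unfolding Zord_def by auto
    qed
    then show "z \<in> Zord n w (stp n (w, Q) id) \<longleftrightarrow> z \<in> Q" using z by simp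
  qed
qed

lemma compat_image: "compatible_perms n w = (\<lambda>Q. stp n (w, Q) id) ` LO (Zs n w)"
proof
  show "compatible_perms n w \<subseteq> (\<lambda>Q. stp n (w, Q) id) ` LO (Zs n w)"
  proof
    fix p assume p: "p \<in> compatible_perms n w"
    have "Zord n w p \<in> LO (Zs n w)" by (rule Zord_LO[OF permutes_inj_on[OF compat_permutes[OF p]]])
    then show "p \<in> (\<lambda>Q. stp n (w, Q) id) ` LO (Zs n w)" using compat_eq_stp[OF p] by blast
  qed
  show "(\<lambda>Q. stp n (w, Q) id) ` LO (Zs n w) \<subseteq> compatible_perms n w"
    using stp_compat by blast
qed

lemma compat_inj: "inj_on (\<lambda>Q. stp n (w, Q) id) (LO (Zs n w))"
  by (rule inj_onI) (metis Zord_stp)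

lemma LO_finite: "finite (LO (Zs n w))"
proof -
  have "LO (Zs n w) \<subseteq> Pow (Zs n w \<times> Zs n w)" unfolding LO_def by auto
  moreover have "finite (Zs n w)" unfolding Zs_def by simp
  ultimately show ?thesis by (meson finite_Pow_iff finite_SigmaI finite_subset)
qed

lemma LO_nonempty: "LO (Zs n w) \<noteq> {}"
proof -
  have "{(x, y). x \<in> Zs n w \<and> y \<in> Zs n w \<and> x < y} \<in> LO (Zs n w)"
    unfolding LO_def by (auto simp: linorder_neq_iff)
  then show ?thesis by blast
qed


definition pb :: "(nat \<Rightarrow> nat) \<Rightarrow> (nat \<times> nat) set \<Rightarrow> (nat \<times> nat) set" where
  "pb t Q = {(x, y). (t x, t y) \<in> Q}"

definition rel :: "(nat \<Rightarrow> nat) \<Rightarrow> (nat \<Rightarrow> int) \<times> (nat \<times> nat) set \<Rightarrow> (nat \<Rightarrow> int) \<times> (nat \<times> nat) set" where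
  "rel t d = (fst d \<circ> t, pb t (snd d))"

lemma cmpG_rel: "cmpG (l \<circ> t) (pb t Q) (s \<circ> t) x y = cmpG l Q s (t x) (t y)"
  by (simp add: cmpG_def pb_def)

lemma card_perm_collect:
  fixes t :: "nat \<Rightarrow> nat"
  assumes "t permutes S" "finite S"
  shows "card {y\<in>S. P (t y)} = card {y\<in>S. P y}"
proof -
  have im: "t ` S = S" by (rule permutes_image[OF assms(1)])
  have "t ` {y\<in>S. P (t y)} = {y\<in>S. P y}"
  proof (rule set_eqI, rule iffI)
    fix x assume "x \<in> t ` {y\<in>S. P (t y)}"
    then obtain y where "y \<in> S" "P (t y)" "x = t y" by blast
    then show "x \<in> {y\<in>S. P y}" using im by blast
  next
    fix x assume x: "x \<in> {y\<in>S. P y}"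
    then have "x \<in> t ` S" using im by simp
    then obtain y where "y \<in> S" "x = t y" by blast
    then show "x \<in> t ` {y\<in>S. P (t y)}" using x by blast
  qed
  moreover have "inj_on t {y\<in>S. P (t y)}" by (rule permutes_inj_on[OF assms(1)])
  ultimately show ?thesis by (metis card_image)
qed

lemma stp_equiv:
  assumes "t permutes {1..n}"
  shows "stp n (rel t d) (s \<circ> t) = stp n d s \<circ> t"
proof
  fix c
  show "stp n (rel t d) (s \<circ> t) c = (stp n d s \<circ> t) c"
  proof (cases "c \<in> {1..n}")
    case True
    have tc: "t c \<in> {1..n}" using permutes_in_image[OF assms] True by simp
    have "stp n (rel t d) (s \<circ> t) c = Suc (card {y\<in>{1..n}. cmpG (fst d) (snd d) s (t y) (t c)})"
      unfolding stp_def rel_def fst_conv snd_conv rperm_eq[OF True] rank_def cmpG_rel ..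
    also have "\<dots> = Suc (card {y\<in>{1..n}. cmpG (fst d) (snd d) s y (t c)})"
      using card_perm_collect[OF assms, of "\<lambda>y. cmpG (fst d) (snd d) s y (t c)"] by simp
    also have "\<dots> = stp n d s (t c)"
      unfolding stp_def rperm_eq[OF tc] rank_def ..
    finally show ?thesis by simp
  next
    case False
    have tc: "t c = c" using permutes_not_in[OF assms False] .
    show ?thesis using False tc by (simp add: stp_out)
  qed
qed

lemma pb_LO:
  assumes "Q \<in> LO (Zs n l)" "t permutes {1..n}"
  shows "pb t Q \<in> LO (Zs n (l \<circ> t))"
proof -
  have inS: "x \<in> {1..n} \<longleftrightarrow> t x \<in> {1..n}" for x using permutes_in_image[OF assms(2)] by simp
  have tinj: "t x = t y \<Longrightarrow> x = y" for x y using permutes_inj[OF assms(2)] unfolding inj_def by blast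
  note L = LO_D[OF assms(1)]
  show ?thesis unfolding LO_def
  proof (intro CollectI conjI allI impI ballI subsetI)
    fix z assume "z \<in> pb t Q"
    then obtain x y where z: "z = (x, y)" "(t x, t y) \<in> Q" unfolding pb_def by auto
    then have "t x \<in> {1..n} \<and> t y \<in> {1..n} \<and> l (t x) = 0 \<and> l (t y) = 0" using L(1) by blast
    then show "z \<in> Zs n (l \<circ> t) \<times> Zs n (l \<circ> t)" using z inS unfolding Zs_def by auto
  next
    fix x show "(x, x) \<notin> pb t Q" unfolding pb_def using L(2) by simp
  next
    fix x y z assume "(x, y) \<in> pb t Q" "(y, z) \<in> pb t Q"
    then show "(x, z) \<in> pb t Q" unfolding pb_def using L(3) by simp
  next
    fix x y assume xy: "x \<in> Zs n (l \<circ> t)" "y \<in> Zs n (l \<circ> t)" "x \<noteq> y"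
    then have "t x \<noteq> t y" using tinj by blast
    moreover have "t x \<in> {1..n}" "t y \<in> {1..n}" "l (t x) = 0" "l (t y) = 0"
      using xy inS unfolding Zs_def by auto
    ultimately have "(t x, t y) \<in> Q \<or> (t y, t x) \<in> Q" using L(4) by blast
    then show "(x, y) \<in> pb t Q \<or> (y, x) \<in> pb t Q" unfolding pb_def by simp
  qed
qed

lemma pb_comp: "pb t (pb u Q) = pb (u \<circ> t) Q"
  unfolding pb_def by auto

lemma pb_id: "pb id Q = Q"
  unfolding pb_def by auto

lemma pb_inj: "t permutes {1..n} \<Longrightarrow> inj_on (pb t) A"
proof (rule inj_onI)
  fix Q Q' assume t: "t permutes {1..n}" and "pb t Q = pb t Q'"
  then have "pb (inv t) (pb t Q) = pb (inv t) (pb t Q')" by simp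
  then show "Q = Q'" unfolding pb_comp permutes_inv_o(1)[OF t] pb_id .
qed

lemma pb_image:
  assumes "t permutes {1..n}"
  shows "pb t ` LO (Zs n l) = LO (Zs n (l \<circ> t))"
proof
  show "pb t ` LO (Zs n l) \<subseteq> LO (Zs n (l \<circ> t))" using pb_LO[OF _ assms] by blast
  show "LO (Zs n (l \<circ> t)) \<subseteq> pb t ` LO (Zs n l)"
  proof
    fix Q assume Q: "Q \<in> LO (Zs n (l \<circ> t))"
    have it: "inv t permutes {1..n}" by (rule permutes_inv[OF assms])
    have "pb (inv t) Q \<in> LO (Zs n (l \<circ> t \<circ> inv t))" by (rule pb_LO[OF Q it])
    moreover have "l \<circ> t \<circ> inv t = l" using permutes_inv_o(1)[OF assms] by (simp add: o_assoc[symmetric])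
    moreover have "pb t (pb (inv t) Q) = Q" unfolding pb_comp permutes_inv_o(2)[OF assms] pb_id ..
    ultimately show "Q \<in> pb t ` LO (Zs n l)" by (metis imageI)
  qed
qed

lemma valid_rel:
  assumes "valid n d" "t permutes {1..n}"
  shows "valid n (rel t d)"
  using pb_LO[OF _ assms(2)] assms(1) unfolding valid_def rel_def by simp

fun G :: "nat \<Rightarrow> (nat \<Rightarrow> nat) \<Rightarrow> ((nat \<Rightarrow> int) \<times> (nat \<times> nat) set) list \<Rightarrow> nat \<Rightarrow> nat" where
  "G n s0 [] = s0"
| "G n s0 (d # ds) = stp n d (G n s0 ds)"

lemma G_permutes:
  assumes "\<forall>d\<in>set ds. valid n d" "s0 permutes {1..n}"
  shows "G n s0 ds permutes {1..n}"
  using assms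
proof (induction ds)
  case Nil then show ?case by simp
next
  case (Cons d ds)
  then have v: "valid n d" and p: "G n s0 ds permutes {1..n}" by auto
  show ?case unfolding G.simps by (rule stp_permutes[OF v p])
qed

lemma G_equiv:
  assumes "t permutes {1..n}"
  shows "G n (s0 \<circ> t) (map (rel t) ds) = G n s0 ds \<circ> t"
proof (induction ds)
  case Nil then show ?case by simp
next
  case (Cons d ds)
  have "G n (s0 \<circ> t) (map (rel t) (d # ds)) = stp n (rel t d) (G n (s0 \<circ> t) (map (rel t) ds))" by simp
  also have "\<dots> = stp n (rel t d) (G n s0 ds \<circ> t)" by (simp only: Cons.IH)
  also have "\<dots> = stp n d (G n s0 ds) \<circ> t" by (rule stp_equiv[OF assms])
  also have "\<dots> = G n s0 (d # ds) \<circ> t" by simp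
  finally show ?case .
qed

definition tiedall :: "((nat \<Rightarrow> int) \<times> (nat \<times> nat) set) list \<Rightarrow> nat \<Rightarrow> nat \<Rightarrow> bool" where
  "tiedall ds c e \<longleftrightarrow> (\<forall>d\<in>set ds. fst d c = fst d e \<and> fst d c \<noteq> 0)"

definition good :: "nat \<Rightarrow> ((nat \<Rightarrow> int) \<times> (nat \<times> nat) set) list \<Rightarrow> bool" where
  "good n ds \<longleftrightarrow> (\<forall>c\<in>{1..n}. \<forall>e\<in>{1..n}. c \<noteq> e \<longrightarrow> \<not> tiedall ds c e)"

lemma tiedall_sym: "tiedall ds c e = tiedall ds e c"
  unfolding tiedall_def by auto

lemma G_indep:
  assumes "\<forall>d\<in>set ds. valid n d" "s0 permutes {1..n}" "s1 permutes {1..n}"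
    and "c \<in> {1..n}" "e \<in> {1..n}" "\<not> tiedall ds c e"
  shows "G n s0 ds c < G n s0 ds e \<longleftrightarrow> G n s1 ds c < G n s1 ds e"
  using assms
proof (induction ds arbitrary: c e)
  case Nil
  then show ?case unfolding tiedall_def by simp
next
  case (Cons d ds)
  let ?a = "G n s0 ds" and ?b = "G n s1 ds"
  have v: "valid n d" "\<forall>d\<in>set ds. valid n d" using Cons.prems(1) by auto
  have pa: "?a permutes {1..n}" by (rule G_permutes[OF v(2) Cons.prems(2)])
  have pb': "?b permutes {1..n}" by (rule G_permutes[OF v(2) Cons.prems(3)])
  have "G n s0 (d # ds) c < G n s0 (d # ds) e \<longleftrightarrow> cmpG (fst d) (snd d) ?a c e"
    using stp_less_iff[OF v(1) pa Cons.prems(4,5)] by simp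
  moreover have "G n s1 (d # ds) c < G n s1 (d # ds) e \<longleftrightarrow> cmpG (fst d) (snd d) ?b c e"
    using stp_less_iff[OF v(1) pb' Cons.prems(4,5)] by simp
  moreover have "cmpG (fst d) (snd d) ?a c e \<longleftrightarrow> cmpG (fst d) (snd d) ?b c e"
  proof (cases "fst d c = fst d e \<and> fst d c \<noteq> 0")
    case True
    then have nt: "\<not> tiedall ds c e" using Cons.prems(6) unfolding tiedall_def by simp
    then have nt': "\<not> tiedall ds e c" using tiedall_sym by metis
    have i1: "?a c < ?a e \<longleftrightarrow> ?b c < ?b e"
      by (rule Cons.IH[OF v(2) Cons.prems(2,3) Cons.prems(4,5) nt])
    have i2: "?a e < ?a c \<longleftrightarrow> ?b e < ?b c"
      by (rule Cons.IH[OF v(2) Cons.prems(2,3) Cons.prems(5,4) nt'])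
    show ?thesis unfolding cmpG_def using i1 i2 True by auto
  next
    case False
    then show ?thesis unfolding cmpG_def by auto
  qed
  ultimately show ?case by simp
qed

lemma G_good_indep:
  assumes "\<forall>d\<in>set ds. valid n d" "good n ds" "s0 permutes {1..n}" "s1 permutes {1..n}"
  shows "G n s0 ds = G n s1 ds"
proof (rule perm_eq_by_order)
  show "G n s0 ds permutes {1..n}" by (rule G_permutes[OF assms(1,3)])
  show "G n s1 ds permutes {1..n}" by (rule G_permutes[OF assms(1,4)])
  fix x y assume xy: "x \<in> {1..n}" "y \<in> {1..n}"
  show "G n s0 ds x < G n s0 ds y \<longleftrightarrow> G n s1 ds x < G n s1 ds y"
  proof (cases "x = y")
    case True then show ?thesis by simp
  next
    case False
    then have "\<not> tiedall ds x y" using assms(2) xy unfolding good_def by blast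
    then show ?thesis by (rule G_indep[OF assms(1,3,4) xy])
  qed
qed

lemma tiedall_rel: "tiedall (map (rel t) ds) c e = tiedall ds (t c) (t e)"
  unfolding tiedall_def rel_def by simp

lemma good_rel:
  assumes "t permutes {1..n}"
  shows "good n (map (rel t) ds) \<longleftrightarrow> good n ds"
proof
  assume g: "good n (map (rel t) ds)"
  show "good n ds" unfolding good_def
  proof (intro ballI impI)
    fix c e assume ce: "c \<in> {1..n}" "e \<in> {1..n}" "c \<noteq> e"
    let ?c = "inv t c" and ?e = "inv t e"
    have it: "inv t permutes {1..n}" by (rule permutes_inv[OF assms])
    have "?c \<in> {1..n}" "?e \<in> {1..n}" using permutes_in_image[OF it] ce by simp_all
    moreover have "?c \<noteq> ?e" using ce permutes_inverses(1)[OF assms] by metis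
    ultimately have "\<not> tiedall (map (rel t) ds) ?c ?e" using g unfolding good_def by blast
    then show "\<not> tiedall ds c e" unfolding tiedall_rel permutes_inverses(1)[OF assms] .
  qed
next
  assume g: "good n ds"
  show "good n (map (rel t) ds)" unfolding good_def tiedall_rel
  proof (intro ballI impI)
    fix c e assume ce: "c \<in> {1..n}" "e \<in> {1..n}" "c \<noteq> e"
    have "t c \<in> {1..n}" "t e \<in> {1..n}" using permutes_in_image[OF assms] ce by simp_all
    moreover have "t c \<noteq> t e" using ce permutes_inj[OF assms] unfolding inj_def by blast
    ultimately show "\<not> tiedall ds (t c) (t e)" using g unfolding good_def by blast
  qed
qed


lemma word_perm:
  assumes "t permutes {1..n}"
  shows "map_pmf (\<lambda>w. w \<circ> t) (word_pmf n al be ga) = word_pmf n al be ga"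
  unfolding word_pmf_def
proof (rule Pi_pmf_bij_betw[symmetric])
  show "finite {1..n}" by simp
  show "bij_betw t {1..n} {1..n}" by (rule permutes_imp_bij[OF assms])
  show "x \<notin> {1..n} \<Longrightarrow> t x \<notin> {1..n}" for x using permutes_not_in[OF assms] by simp
qed

definition Dp :: "nat \<Rightarrow> (nat \<Rightarrow> real) \<Rightarrow> (nat \<Rightarrow> real) \<Rightarrow> real \<Rightarrow> ((nat \<Rightarrow> int) \<times> (nat \<times> nat) set) pmf" where
  "Dp n al be ga = bind_pmf (word_pmf n al be ga) (\<lambda>w. map_pmf (Pair w) (pmf_of_set (LO (Zs n w))))"

lemma Dp_valid: "d \<in> set_pmf (Dp n al be ga) \<Longrightarrow> valid n d"
  unfolding Dp_def valid_def using LO_finite LO_nonempty by auto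

lemma Dp_rel:
  assumes "t permutes {1..n}"
  shows "map_pmf (rel t) (Dp n al be ga) = Dp n al be ga"
proof -
  let ?F = "\<lambda>w. map_pmf (Pair w) (pmf_of_set (LO (Zs n w)))"
  have "map_pmf (rel t) (Dp n al be ga) = bind_pmf (word_pmf n al be ga) (\<lambda>w. map_pmf (rel t) (?F w))"
    unfolding Dp_def map_bind_pmf ..
  also have "\<dots> = bind_pmf (word_pmf n al be ga) (\<lambda>w. ?F (w \<circ> t))"
  proof (rule bind_pmf_cong[OF refl])
    fix w
    have "map_pmf (rel t) (?F w) = map_pmf (Pair (w \<circ> t)) (map_pmf (pb t) (pmf_of_set (LO (Zs n w))))"
      unfolding map_pmf_comp rel_def by simp
    also have "map_pmf (pb t) (pmf_of_set (LO (Zs n w))) = pmf_of_set (pb t ` LO (Zs n w))"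
      by (rule map_pmf_of_set_inj[OF pb_inj[OF assms] LO_nonempty LO_finite])
    also have "pb t ` LO (Zs n w) = LO (Zs n (w \<circ> t))" by (rule pb_image[OF assms])
    finally show "map_pmf (rel t) (?F w) = ?F (w \<circ> t)" .
  qed
  also have "\<dots> = bind_pmf (map_pmf (\<lambda>w. w \<circ> t) (word_pmf n al be ga)) ?F"
    unfolding bind_map_pmf ..
  also have "\<dots> = Dp n al be ga" unfolding word_perm[OF assms] Dp_def ..
  finally show ?thesis .
qed

lemma compat_pmf:
  "pmf_of_set (compatible_perms n w) = map_pmf (\<lambda>Q. stp n (w, Q) id) (pmf_of_set (LO (Zs n w)))"
  unfolding compat_image by (rule map_pmf_of_set_inj[OF compat_inj LO_nonempty LO_finite, symmetric])

lemma shuffle_Dp: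
  assumes "s permutes {1..n}"
  shows "map_pmf (\<lambda>p. p \<circ> s) (shuffle_pmf n al be ga) = map_pmf (\<lambda>d. stp n d s) (Dp n al be ga)"
proof -
  have "map_pmf (\<lambda>p. p \<circ> s) (shuffle_pmf n al be ga)
      = bind_pmf (word_pmf n al be ga) (\<lambda>w. map_pmf (\<lambda>Q. stp n (w, Q) id \<circ> s) (pmf_of_set (LO (Zs n w))))"
    unfolding shuffle_pmf_def map_bind_pmf compat_pmf map_pmf_comp ..
  also have "\<dots> = bind_pmf (word_pmf n al be ga) (\<lambda>w. map_pmf (\<lambda>Q. stp n (rel s (w, Q)) s) (pmf_of_set (LO (Zs n w))))"
  proof -
    have "stp n (rel s (w, Q)) s = stp n (w, Q) id \<circ> s" for w Q
      using stp_equiv[OF assms, of "(w, Q)" id] by simp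
    then show ?thesis by simp
  qed
  also have "\<dots> = map_pmf (\<lambda>d. stp n (rel s d) s) (Dp n al be ga)"
    unfolding Dp_def map_bind_pmf map_pmf_comp by simp
  also have "\<dots> = map_pmf (\<lambda>d. stp n d s) (map_pmf (rel s) (Dp n al be ga))"
    unfolding map_pmf_comp ..
  also have "\<dots> = map_pmf (\<lambda>d. stp n d s) (Dp n al be ga)" unfolding Dp_rel[OF assms] ..
  finally show ?thesis .
qed

fun dat :: "nat \<Rightarrow> (nat \<Rightarrow> real) \<Rightarrow> (nat \<Rightarrow> real) \<Rightarrow> real \<Rightarrow> nat \<Rightarrow> ((nat \<Rightarrow> int) \<times> (nat \<times> nat) set) list pmf" where
  "dat n al be ga 0 = return_pmf []"
| "dat n al be ga (Suc k) = bind_pmf (dat n al be ga k) (\<lambda>ds. map_pmf (\<lambda>d. d # ds) (Dp n al be ga))"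

lemma dat_valid: "ds \<in> set_pmf (dat n al be ga k) \<Longrightarrow> \<forall>d\<in>set ds. valid n d"
  by (induction k arbitrary: ds) (auto dest: Dp_valid)

lemma iter_dat: "iter_shuffle_pmf n al be ga k = map_pmf (G n id) (dat n al be ga k)"
proof (induction k)
  case 0 then show ?case by (simp add: id_def)
next
  case (Suc k)
  have "iter_shuffle_pmf n al be ga (Suc k)
      = bind_pmf (dat n al be ga k) (\<lambda>ds. map_pmf (\<lambda>p. p \<circ> G n id ds) (shuffle_pmf n al be ga))"
    by (simp add: Suc.IH bind_map_pmf id_def)
  also have "\<dots> = bind_pmf (dat n al be ga k) (\<lambda>ds. map_pmf (\<lambda>d. stp n d (G n id ds)) (Dp n al be ga))"
  proof (rule bind_pmf_cong[OF refl])
    fix ds assume "ds \<in> set_pmf (dat n al be ga k)"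
    then have "G n id ds permutes {1..n}" using G_permutes dat_valid permutes_id by blast
    then show "map_pmf (\<lambda>p. p \<circ> G n id ds) (shuffle_pmf n al be ga) = map_pmf (\<lambda>d. stp n d (G n id ds)) (Dp n al be ga)"
      by (rule shuffle_Dp)
  qed
  also have "\<dots> = map_pmf (G n id) (dat n al be ga (Suc k))"
    by (simp add: map_bind_pmf map_pmf_comp)
  finally show ?case .
qed

lemma dat_rel:
  assumes "t permutes {1..n}"
  shows "map_pmf (map (rel t)) (dat n al be ga k) = dat n al be ga k"
proof (induction k)
  case 0 then show ?case by simp
next
  case (Suc k)
  have "map_pmf (map (rel t)) (dat n al be ga (Suc k))
     = bind_pmf (dat n al be ga k) (\<lambda>ds. map_pmf (\<lambda>d. d # map (rel t) ds) (map_pmf (rel t) (Dp n al be ga)))"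
    by (simp add: map_bind_pmf map_pmf_comp)
  also have "\<dots> = bind_pmf (map_pmf (map (rel t)) (dat n al be ga k)) (\<lambda>ds. map_pmf (\<lambda>d. d # ds) (Dp n al be ga))"
    unfolding Dp_rel[OF assms] bind_map_pmf ..
  also have "\<dots> = dat n al be ga (Suc k)" unfolding Suc.IH by simp
  finally show ?case .
qed

definition fL :: "(nat \<Rightarrow> real) \<Rightarrow> (nat \<Rightarrow> real) \<Rightarrow> real \<Rightarrow> int \<Rightarrow> real" where
  "fL al be ga = (\<lambda>z::int. if z > 0 then al (nat z) else if z < 0 then be (nat (- z)) else ga)"

locale letters =
  fixes al be :: "nat \<Rightarrow> real" and ga A B :: real
  assumes ga: "ga \<ge> 0"
    and al: "\<And>i. i \<ge> 1 \<Longrightarrow> al i \<ge> 0"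
    and be: "\<And>i. i \<ge> 1 \<Longrightarrow> be i \<ge> 0"
    and sA: "(al has_sum A) {1..}"
    and sB: "(be has_sum B) {1..}"
    and tot: "ga + A + B = 1"
begin

abbreviation "f \<equiv> fL al be ga"

lemma f_nonneg: "f z \<ge> 0"
  unfolding fL_def using al be ga by auto

lemma img_pos: "int ` {1..} = {z::int. z > 0}"
proof (intro equalityI subsetI)
  fix z :: int assume "z \<in> {z. z > 0}" then have "z = int (nat z)" "nat z \<in> {1..}" by auto
  then show "z \<in> int ` {1..}" by blast
qed auto

lemma img_neg: "(\<lambda>i. - int i) ` {1..} = {z::int. z < 0}"
proof (intro equalityI subsetI)
  fix z :: int assume "z \<in> {z. z < 0}" then have "z = - int (nat (- z))" "nat (- z) \<in> {1..}" by auto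
  then show "z \<in> (\<lambda>i. - int i) ` {1..}" by blast
qed auto

lemma univ_split: "(UNIV :: int set) = ({z. z > 0} \<union> {z. z < 0}) \<union> {0}"
  by auto

lemma has_sum_parts:
  fixes g :: "int \<Rightarrow> real" and a b :: "nat \<Rightarrow> real" and Sa Sb :: real
  assumes "(a has_sum Sa) {1..}" "(b has_sum Sb) {1..}"
    and "\<And>i. i \<ge> 1 \<Longrightarrow> g (int i) = a i" "\<And>i. i \<ge> 1 \<Longrightarrow> g (- int i) = b i"
  shows "(g has_sum Sa) {z. z > 0}" "(g has_sum Sb) {z. z < 0}"
proof -
  have "((g \<circ> int) has_sum Sa) {1..}"
    using assms(1) by (rule has_sum_cong[THEN iffD2, rotated]) (use assms(3) in simp)
  then have "(g has_sum Sa) (int ` {1..})" by (subst has_sum_reindex) (auto simp: inj_on_def)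
  then show "(g has_sum Sa) {z. z > 0}" unfolding img_pos .
  have "((g \<circ> (\<lambda>i. - int i)) has_sum Sb) {1..}"
    using assms(2) by (rule has_sum_cong[THEN iffD2, rotated]) (use assms(4) in simp)
  then have "(g has_sum Sb) ((\<lambda>i. - int i) ` {1..})" by (subst has_sum_reindex) (auto simp: inj_on_def)
  then show "(g has_sum Sb) {z. z < 0}" unfolding img_neg .
qed

lemma f_has_sum: "(f has_sum 1) UNIV"
proof -
  have p: "(f has_sum A) {z. z > 0}" "(f has_sum B) {z. z < 0}"
    by (rule has_sum_parts[OF sA sB]; simp add: fL_def)+
  have h1: "(f has_sum (A + B)) ({z. z > 0} \<union> {z. z < 0})"
    by (rule has_sum_Un_disjoint[OF p]) auto
  have "(f has_sum f 0) {0}" by (rule has_sum_finiteI) simp_all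
  moreover have "f 0 = ga" by (simp add: fL_def)
  ultimately have h0: "(f has_sum ga) {0}" by simp
  have "(f has_sum (A + B + ga)) (({z. z > 0} \<union> {z. z < 0}) \<union> {0})"
    by (rule has_sum_Un_disjoint[OF h1 h0]) auto
  then show ?thesis using tot unfolding univ_split[symmetric] by (simp add: add.commute add.left_commute)
qed

lemma pmf_L: "pmf (letter_pmf al be ga) z = f z"
proof -
  have sum: "f summable_on UNIV" using f_has_sum by (rule has_sum_imp_summable)
  then have abs: "Infinite_Set_Sum.abs_summable_on f UNIV"
    using summable_on_iff_abs_summable_on_real abs_summable_equivalent by blast
  have "(\<integral>\<^sup>+x. ennreal (f x) \<partial>count_space UNIV) = ennreal (infsetsum f UNIV)"
    by (rule nn_integral_conv_infsetsum[OF abs f_nonneg])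
  also have "infsetsum f UNIV = infsum f UNIV" by (rule infsetsum_infsum[OF abs])
  also have "infsum f UNIV = 1" using f_has_sum by (rule infsumI)
  finally have "(\<integral>\<^sup>+x. ennreal (f x) \<partial>count_space UNIV) = 1" by simp
  then show ?thesis unfolding letter_pmf_def fL_def[symmetric]
    by (subst pmf_embed_pmf) (use f_nonneg in auto)
qed

lemma f_le_1: "f z \<le> 1"
proof -
  have "infsum f {z} \<le> infsum f UNIV"
    by (rule infsum_mono_neutral) (use f_has_sum has_sum_imp_summable f_nonneg in auto)
  then show ?thesis using infsumI[OF f_has_sum] by simp
qed

definition "s2 = infsum (\<lambda>i. (al i)\<^sup>2) {1..} + infsum (\<lambda>i. (be i)\<^sup>2) {1..}"

lemma sq_has_sum: "((\<lambda>z. (f z)\<^sup>2) has_sum s2) {z. z \<noteq> 0}"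
proof -
  have sq: "(\<lambda>z. (f z)\<^sup>2) summable_on UNIV"
  proof (rule summable_on_comparison_test)
    show "f summable_on UNIV" using f_has_sum by (rule has_sum_imp_summable)
    fix z :: int
    show "(f z)\<^sup>2 \<le> f z" using f_le_1[of z] f_nonneg[of z] by (simp add: power2_eq_square mult_left_le)
    show "0 \<le> (f z)\<^sup>2" by simp
  qed
  have "(\<lambda>z. (f z)\<^sup>2) summable_on {z. z > 0}" by (rule summable_on_subset_banach[OF sq]) auto
  then have "(\<lambda>z. (f z)\<^sup>2) summable_on int ` {1..}" unfolding img_pos .
  then have "((\<lambda>z. (f z)\<^sup>2) \<circ> int) summable_on {1..}" by (subst summable_on_reindex[symmetric]) (auto simp: inj_on_def)
  then have "(\<lambda>i. (al i)\<^sup>2) summable_on {1..}"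
    by (rule summable_on_cong[THEN iffD1, rotated]) (simp add: fL_def)
  then have a2: "((\<lambda>i. (al i)\<^sup>2) has_sum infsum (\<lambda>i. (al i)\<^sup>2) {1..}) {1..}" by simp
  have "(\<lambda>z. (f z)\<^sup>2) summable_on {z. z < 0}" by (rule summable_on_subset_banach[OF sq]) auto
  then have "(\<lambda>z. (f z)\<^sup>2) summable_on (\<lambda>i. - int i) ` {1..}" unfolding img_neg .
  then have "((\<lambda>z. (f z)\<^sup>2) \<circ> (\<lambda>i. - int i)) summable_on {1..}" by (subst summable_on_reindex[symmetric]) (auto simp: inj_on_def)
  then have "(\<lambda>i. (be i)\<^sup>2) summable_on {1..}"
    by (rule summable_on_cong[THEN iffD1, rotated]) (simp add: fL_def)
  then have b2: "((\<lambda>i. (be i)\<^sup>2) has_sum infsum (\<lambda>i. (be i)\<^sup>2) {1..}) {1..}" by simp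
  have p: "((\<lambda>z. (f z)\<^sup>2) has_sum infsum (\<lambda>i. (al i)\<^sup>2) {1..}) {z. z > 0}"
          "((\<lambda>z. (f z)\<^sup>2) has_sum infsum (\<lambda>i. (be i)\<^sup>2) {1..}) {z. z < 0}"
    by (rule has_sum_parts[OF a2 b2]; simp add: fL_def)+
  have "((\<lambda>z. (f z)\<^sup>2) has_sum s2) ({z. z > 0} \<union> {z. z < 0})"
    unfolding s2_def by (rule has_sum_Un_disjoint[OF p]) auto
  moreover have "{z::int. z \<noteq> 0} = {z. z > 0} \<union> {z. z < 0}" by auto
  ultimately show ?thesis by simp
qed

lemma s2_nonneg: "s2 \<ge> 0"
  unfolding s2_def by (intro add_nonneg_nonneg infsum_nonneg) auto

lemma tie_pair: "measure_pmf.prob (pair_pmf (letter_pmf al be ga) (letter_pmf al be ga)) {(x, y). x = y \<and> x \<noteq> 0} = s2"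
proof -
  let ?L = "letter_pmf al be ga"
  have bij: "bij_betw (\<lambda>z. (z, z)) {z::int. z \<noteq> 0} {(x, y). x = y \<and> x \<noteq> 0}"
  proof (rule bij_betwI')
    fix y :: "int \<times> int" assume "y \<in> {(x, y). x = y \<and> x \<noteq> 0}"
    then obtain a where "y = (a, a)" "a \<noteq> 0" by auto
    then show "\<exists>x\<in>{z::int. z \<noteq> 0}. y = (x, x)" by blast
  qed auto
  have "(\<lambda>z. (f z)\<^sup>2) summable_on {z. z \<noteq> 0}" using sq_has_sum by (rule has_sum_imp_summable)
  then have "Infinite_Sum.abs_summable_on (\<lambda>z. (f z)\<^sup>2) {z. z \<noteq> 0}"
    by (rule summable_on_iff_abs_summable_on_real[THEN iffD1])
  then have abs: "Infinite_Set_Sum.abs_summable_on (\<lambda>z. (f z)\<^sup>2) {z. z \<noteq> 0}"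
    by (rule abs_summable_equivalent[THEN iffD1])
  have "measure_pmf.prob (pair_pmf ?L ?L) {(x, y). x = y \<and> x \<noteq> 0} = infsetsum (pmf (pair_pmf ?L ?L)) {(x, y). x = y \<and> x \<noteq> 0}"
    by (rule measure_pmf_conv_infsetsum)
  also have "\<dots> = infsetsum (\<lambda>z. pmf (pair_pmf ?L ?L) (z, z)) {z. z \<noteq> 0}"
    by (rule infsetsum_reindex_bij_betw[OF bij, symmetric])
  also have "\<dots> = infsetsum (\<lambda>z. (f z)\<^sup>2) {z. z \<noteq> 0}"
    by (simp add: pmf_pair pmf_L power2_eq_square)
  also have "\<dots> = infsum (\<lambda>z. (f z)\<^sup>2) {z. z \<noteq> 0}" by (rule infsetsum_infsum[OF abs])
  also have "\<dots> = s2" using sq_has_sum by (rule infsumI)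
  finally show ?thesis .
qed

end


lemma word_pair:
  assumes "c \<in> {1..n}" "e \<in> {1..n}" "c \<noteq> e"
  shows "map_pmf (\<lambda>w. (w c, w e)) (word_pmf n al be ga) = pair_pmf (letter_pmf al be ga) (letter_pmf al be ga)"
proof -
  let ?L = "letter_pmf al be ga"
  define R where "R = {1..n} - {c, e}"
  have eq: "{1..n} = insert c (insert e R)" using assms unfolding R_def by auto
  have fin: "finite R" unfolding R_def by simp
  have nc: "c \<notin> insert e R" using assms unfolding R_def by auto
  have ne: "e \<notin> R" unfolding R_def by auto
  let ?P = "Pi_pmf R 0 (\<lambda>_. ?L)"
  have "word_pmf n al be ga = map_pmf (\<lambda>(y, f). f(c := y)) (pair_pmf ?L (map_pmf (\<lambda>(y, f). f(e := y)) (pair_pmf ?L ?P)))"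
    unfolding word_pmf_def eq Pi_pmf_insert[OF finite_insert[THEN iffD2, OF fin] nc] Pi_pmf_insert[OF fin ne] ..
  also have "\<dots> = map_pmf (\<lambda>(y, f). f(c := y)) (map_pmf (apsnd (\<lambda>(y, f). f(e := y))) (pair_pmf ?L (pair_pmf ?L ?P)))"
    unfolding pair_map_pmf2 ..
  finally have w: "word_pmf n al be ga = map_pmf (\<lambda>(y, f). f(c := y)) (map_pmf (apsnd (\<lambda>(y, f). f(e := y))) (pair_pmf ?L (pair_pmf ?L ?P)))" .
  have "map_pmf (\<lambda>w. (w c, w e)) (word_pmf n al be ga) = map_pmf (\<lambda>(a, b). (id a, fst b)) (pair_pmf ?L (pair_pmf ?L ?P))"
    unfolding w map_pmf_comp using assms(3) by (intro map_pmf_cong refl) (auto simp: case_prod_beta)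
  also have "\<dots> = pair_pmf ?L ?L" unfolding map_pair map_fst_pair_pmf pmf.map_id0 id_def by simp
  finally show ?thesis .
qed

lemma map_fst_Dp: "map_pmf fst (Dp n al be ga) = word_pmf n al be ga"
  unfolding Dp_def map_bind_pmf map_pmf_comp by (simp add: bind_return_pmf')

definition tieq :: "nat \<Rightarrow> (nat \<Rightarrow> real) \<Rightarrow> (nat \<Rightarrow> real) \<Rightarrow> real \<Rightarrow> nat \<Rightarrow> nat \<Rightarrow> real" where
  "tieq n al be ga c e = measure_pmf.prob (Dp n al be ga) {d. fst d c = fst d e \<and> fst d c \<noteq> 0}"

lemma tieq_eq:
  assumes "c \<in> {1..n}" "e \<in> {1..n}" "c \<noteq> e"
  shows "tieq n al be ga c e = measure_pmf.prob (pair_pmf (letter_pmf al be ga) (letter_pmf al be ga)) {(x, y). x = y \<and> x \<noteq> 0}"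
proof -
  have "tieq n al be ga c e = measure_pmf.prob (map_pmf fst (Dp n al be ga)) {w. w c = w e \<and> w c \<noteq> 0}"
    unfolding tieq_def by simp
  also have "\<dots> = measure_pmf.prob (map_pmf (\<lambda>w. (w c, w e)) (word_pmf n al be ga)) {(x, y). x = y \<and> x \<noteq> 0}"
    unfolding map_fst_Dp by simp
  also have "\<dots> = measure_pmf.prob (pair_pmf (letter_pmf al be ga) (letter_pmf al be ga)) {(x, y). x = y \<and> x \<noteq> 0}"
    unfolding word_pair[OF assms] ..
  finally show ?thesis .
qed

lemma tie_dat:
  "measure_pmf.prob (dat n al be ga k) {ds. tiedall ds c e} = (tieq n al be ga c e) ^ k"
proof -
  let ?q = "tieq n al be ga c e"
  have q0: "?q \<ge> 0" unfolding tieq_def by simp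
  have "emeasure (measure_pmf (dat n al be ga k)) {ds. tiedall ds c e} = ennreal (?q ^ k)"
  proof (induction k)
    case 0 then show ?case by (simp add: tiedall_def)
  next
    case (Suc k)
    have pre: "emeasure (measure_pmf (map_pmf (\<lambda>d. d # ds) (Dp n al be ga))) {ds. tiedall ds c e}
        = ennreal ?q * indicator {ds. tiedall ds c e} ds" for ds
    proof (cases "tiedall ds c e")
      case True
      have pe: "(\<lambda>d. d # ds) -` {ds. tiedall ds c e} = {d. fst d c = fst d e \<and> fst d c \<noteq> 0}"
        using True unfolding tiedall_def by auto
      show ?thesis unfolding emeasure_map_pmf pe using True
        by (simp add: tieq_def measure_pmf.emeasure_eq_measure)
    next
      case False
      have pe: "(\<lambda>d. d # ds) -` {ds. tiedall ds c e} = {}"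
        using False unfolding tiedall_def by auto
      show ?thesis unfolding emeasure_map_pmf pe using False by simp
    qed
    have "emeasure (measure_pmf (dat n al be ga (Suc k))) {ds. tiedall ds c e}
        = (\<integral>\<^sup>+ds. emeasure (measure_pmf (map_pmf (\<lambda>d. d # ds) (Dp n al be ga))) {ds. tiedall ds c e} \<partial>measure_pmf (dat n al be ga k))"
      by (simp only: dat.simps emeasure_bind_pmf)
    also have "\<dots> = (\<integral>\<^sup>+ds. ennreal ?q * indicator {ds. tiedall ds c e} ds \<partial>measure_pmf (dat n al be ga k))"
      by (simp only: pre)
    also have "\<dots> = ennreal ?q * emeasure (measure_pmf (dat n al be ga k)) {ds. tiedall ds c e}"
      by (rule nn_integral_cmult_indicator) simp
    also have "\<dots> = ennreal (?q ^ Suc k)" using Suc.IH q0 by (simp add: ennreal_mult')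
    finally show ?case .
  qed
  then show ?thesis using q0 by (simp add: measure_pmf.emeasure_eq_measure)
qed



lemma pairs_card: "card {(c, e). c \<in> {1..n} \<and> e \<in> {1..n} \<and> c < (e::nat)} = n choose 2"
proof (induction n)
  case 0 then show ?case by simp
next
  case (Suc n)
  have eq: "{(c, e). c \<in> {1..Suc n} \<and> e \<in> {1..Suc n} \<and> c < e}
      = {(c, e). c \<in> {1..n} \<and> e \<in> {1..n} \<and> c < e} \<union> (\<lambda>c. (c, Suc n)) ` {1..n}"
    by (auto simp: le_Suc_eq)
  have "card ({(c, e). c \<in> {1..n} \<and> e \<in> {1..n} \<and> c < e} \<union> (\<lambda>c. (c, Suc n)) ` {1..n})
      = card {(c, e). c \<in> {1..n} \<and> e \<in> {1..n} \<and> c < e} + card ((\<lambda>c. (c, Suc n)) ` {1..n})"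
  proof (rule card_Un_disjoint)
    show "finite {(c, e). c \<in> {1..n} \<and> e \<in> {1..n} \<and> c < e}"
      by (rule finite_subset[of _ "{1..n} \<times> {1..n}"]) auto
  qed auto
  also have "card ((\<lambda>c. (c, Suc n)) ` {1..n}) = n" by (subst card_image) (auto simp: inj_on_def)
  finally show ?case unfolding eq Suc.IH by (simp add: numeral_2_eq_2)
qed

context letters
begin

definition "Xk n k = dat n al be ga k"

lemma bad_bound:
  "measure_pmf.prob (dat n al be ga k) {ds. \<not> good n ds} \<le> real (n choose 2) * s2 ^ k"
proof -
  let ?X = "dat n al be ga k"
  let ?P = "{(c, e). c \<in> {1..n} \<and> e \<in> {1..n} \<and> c < (e::nat)}"
  have finP: "finite ?P" by (rule finite_subset[of _ "{1..n} \<times> {1..n}"]) auto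
  have sub: "{ds. \<not> good n ds} \<subseteq> (\<Union>p\<in>?P. {ds. tiedall ds (fst p) (snd p)})"
  proof
    fix ds assume "ds \<in> {ds. \<not> good n ds}"
    then obtain c e where ce: "c \<in> {1..n}" "e \<in> {1..n}" "c \<noteq> e" "tiedall ds c e"
      unfolding good_def by auto
    show "ds \<in> (\<Union>p\<in>?P. {ds. tiedall ds (fst p) (snd p)})"
    proof (cases "c < e")
      case True
      then have ceP: "(c, e) \<in> ?P" using ce by simp
      show ?thesis by (rule UN_I[OF ceP]) (simp add: ce(4))
    next
      case False
      then have ecP: "(e, c) \<in> ?P" using ce by simp
      have "tiedall ds e c" using ce(4) tiedall_sym by metis
      then show ?thesis by (intro UN_I[OF ecP]) simp
    qed
  qed
  have "measure_pmf.prob ?X {ds. \<not> good n ds} \<le> measure_pmf.prob ?X (\<Union>p\<in>?P. {ds. tiedall ds (fst p) (snd p)})"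
    by (rule measure_pmf.finite_measure_mono[OF sub]) simp
  also have "\<dots> \<le> (\<Sum>p\<in>?P. measure_pmf.prob ?X {ds. tiedall ds (fst p) (snd p)})"
    by (rule measure_pmf.finite_measure_subadditive_finite[OF finP]) simp
  also have "\<dots> = (\<Sum>p\<in>?P. s2 ^ k)"
  proof (rule sum.cong[OF refl])
    fix p assume "p \<in> ?P"
    then have p: "fst p \<in> {1..n}" "snd p \<in> {1..n}" "fst p \<noteq> snd p" by auto
    show "measure_pmf.prob ?X {ds. tiedall ds (fst p) (snd p)} = s2 ^ k"
      unfolding tie_dat tieq_eq[OF p] tie_pair ..
  qed
  also have "\<dots> = real (n choose 2) * s2 ^ k" using pairs_card[of n] by simp
  finally show ?thesis .
qed

end

lemma perm_cancel:
  fixes g h t :: "nat \<Rightarrow> nat"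
  assumes "t permutes S" "g \<circ> t = h \<circ> t"
  shows "g = h"
proof -
  have "g \<circ> t \<circ> inv t = h \<circ> t \<circ> inv t" using assms(2) by simp
  then show ?thesis by (simp add: o_assoc[symmetric] permutes_inv_o(1)[OF assms(1)])
qed

lemma sym_step:
  assumes t: "t permutes {1..n}"
  shows "measure_pmf.prob (dat n al be ga k) {ds. G n id ds = r \<circ> t \<and> good n ds}
       = measure_pmf.prob (dat n al be ga k) {ds. G n id ds = r \<and> good n ds}"
proof -
  let ?X = "dat n al be ga k"
  have "measure_pmf.prob ?X {ds. G n id ds = r \<circ> t \<and> good n ds}
      = measure_pmf.prob (map_pmf (map (rel t)) ?X) {ds. G n id ds = r \<circ> t \<and> good n ds}"
    unfolding dat_rel[OF t] ..
  also have "\<dots> = measure_pmf.prob ?X (map (rel t) -` {ds. G n id ds = r \<circ> t \<and> good n ds})"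
    by simp
  also have "\<dots> = measure_pmf.prob ?X (map (rel t) -` {ds. G n id ds = r \<circ> t \<and> good n ds} \<inter> set_pmf ?X)"
    by (rule measure_Int_set_pmf[symmetric])
  also have "map (rel t) -` {ds. G n id ds = r \<circ> t \<and> good n ds} \<inter> set_pmf ?X
      = {ds. G n id ds = r \<and> good n ds} \<inter> set_pmf ?X"
  proof (rule set_eqI)
    fix ds
    show "ds \<in> map (rel t) -` {ds. G n id ds = r \<circ> t \<and> good n ds} \<inter> set_pmf ?X
      \<longleftrightarrow> ds \<in> {ds. G n id ds = r \<and> good n ds} \<inter> set_pmf ?X"
    proof (cases "ds \<in> set_pmf ?X \<and> good n ds")
      case True
      then have v: "\<forall>d\<in>set ds. valid n d" using dat_valid by blast
      have v': "\<forall>d\<in>set (map (rel t) ds). valid n d" using v valid_rel[OF _ t] by auto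
      have g: "good n ds" using True by simp
      then have g': "good n (map (rel t) ds)" using good_rel[OF t] by simp
      have "G n id (map (rel t) ds) = G n t (map (rel t) ds)"
        by (rule G_good_indep[OF v' g' permutes_id t])
      also have "\<dots> = G n (id \<circ> t) (map (rel t) ds)" by simp
      also have "\<dots> = G n id ds \<circ> t" by (rule G_equiv[OF t])
      finally have eq: "G n id (map (rel t) ds) = G n id ds \<circ> t" .
      have "G n id ds \<circ> t = r \<circ> t \<longleftrightarrow> G n id ds = r" using perm_cancel[OF t] by blast
      then show ?thesis using True eq g g' by simp
    next
      case False
      then show ?thesis using good_rel[OF t] by auto
    qed
  qed
  also have "measure_pmf.prob ?X ({ds. G n id ds = r \<and> good n ds} \<inter> set_pmf ?X)
      = measure_pmf.prob ?X {ds. G n id ds = r \<and> good n ds}"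
    by (rule measure_Int_set_pmf)
  finally show ?thesis .
qed

lemma sum_good:
  "(\<Sum>r\<in>{r. r permutes {1..n}}. measure_pmf.prob (dat n al be ga k) {ds. G n id ds = r \<and> good n ds})
     = measure_pmf.prob (dat n al be ga k) {ds. good n ds}"
proof -
  let ?X = "dat n al be ga k"
  let ?S = "{r. r permutes {1..n}}"
  let ?M = "map_pmf (\<lambda>ds. (G n id ds, good n ds)) ?X"
  have finS: "finite ?S" by (rule finite_permutations) simp
  have "measure_pmf.prob ?X {ds. good n ds} = measure_pmf.prob ?M {p. snd p}"
    by simp
  also have "\<dots> = measure_pmf.prob ?M ({p. snd p} \<inter> set_pmf ?M)"
    by (rule measure_Int_set_pmf[symmetric])
  also have "{p. snd p} \<inter> set_pmf ?M = (?S \<times> {True}) \<inter> set_pmf ?M"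
  proof -
    have inS: "fst p \<in> ?S" if "p \<in> set_pmf ?M" for p
    proof -
      from that obtain ds where ds: "ds \<in> set_pmf ?X" "p = (G n id ds, good n ds)" by auto
      have "G n id ds permutes {1..n}" by (rule G_permutes[OF dat_valid[OF ds(1)] permutes_id])
      then show ?thesis using ds(2) by simp
    qed
    show ?thesis
    proof (rule set_eqI)
      fix p :: "(nat \<Rightarrow> nat) \<times> bool"
      obtain a b where p: "p = (a, b)" by (cases p)
      show "p \<in> {p. snd p} \<inter> set_pmf ?M \<longleftrightarrow> p \<in> (?S \<times> {True}) \<inter> set_pmf ?M"
        using inS[of p] unfolding p by auto
    qed
  qed
  also have "measure_pmf.prob ?M ((?S \<times> {True}) \<inter> set_pmf ?M) = measure_pmf.prob ?M (?S \<times> {True})"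
    by (rule measure_Int_set_pmf)
  also have "\<dots> = (\<Sum>p\<in>?S \<times> {True}. pmf ?M p)"
    by (rule measure_measure_pmf_finite) (use finS in simp)
  also have "\<dots> = (\<Sum>r\<in>?S. pmf ?M (r, True))"
  proof -
    have "?S \<times> {True} = (\<lambda>r. (r, True)) ` ?S" by auto
    moreover have "inj_on (\<lambda>r. (r, True)) ?S" by (auto simp: inj_on_def)
    ultimately show ?thesis by (simp add: sum.reindex)
  qed
  also have "\<dots> = (\<Sum>r\<in>?S. measure_pmf.prob ?X {ds. G n id ds = r \<and> good n ds})"
    by (intro sum.cong refl) (simp add: pmf_map vimage_def)
  finally show ?thesis by simp
qed


context letters
begin

lemma main_bound:
  assumes r: "r permutes {1..n}"
  shows "1 - pmf (iter_shuffle_pmf n al be ga k) r / (1 / fact n) \<le> real (n choose 2) * s2 ^ k"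
proof -
  let ?X = "dat n al be ga k"
  let ?S = "{r. r permutes {1..n}}"
  define f where "f r = measure_pmf.prob ?X {ds. G n id ds = r \<and> good n ds}" for r
  have const: "f r = f id" if "r permutes {1..n}" for r
    using sym_step[OF that, where r=id and k=k and al=al and be=be and ga=ga] unfolding f_def by simp
  have "measure_pmf.prob ?X {ds. good n ds} = (\<Sum>r\<in>?S. f r)"
    unfolding f_def by (rule sum_good[symmetric])
  also have "\<dots> = (\<Sum>r\<in>?S. f id)" by (rule sum.cong) (auto intro: const)
  also have "\<dots> = fact n * f id"
    using card_permutations[of "{1..n}" n] by simp
  finally have good_eq: "measure_pmf.prob ?X {ds. good n ds} = fact n * f id" .
  have "measure_pmf.prob ?X {ds. \<not> good n ds} = measure_pmf.prob ?X (UNIV - {ds. good n ds})"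
    by (rule arg_cong[where f="measure_pmf.prob ?X"]) auto
  also have "\<dots> = 1 - measure_pmf.prob ?X {ds. good n ds}"
    using measure_pmf.prob_compl[of "{ds. good n ds}" ?X] by simp
  finally have "1 - measure_pmf.prob ?X {ds. good n ds} \<le> real (n choose 2) * s2 ^ k"
    using bad_bound[of n k] by simp
  then have A: "1 - fact n * f r \<le> real (n choose 2) * s2 ^ k"
    using good_eq const[OF r] by simp
  have "pmf (iter_shuffle_pmf n al be ga k) r = measure_pmf.prob ?X {ds. G n id ds = r}"
    unfolding iter_dat pmf_map by (simp add: vimage_def)
  also have "\<dots> \<ge> f r" unfolding f_def
    by (rule measure_pmf.finite_measure_mono) auto
  finally have B: "f r \<le> pmf (iter_shuffle_pmf n al be ga k) r" .
  have "1 - pmf (iter_shuffle_pmf n al be ga k) r / (1 / fact n) = 1 - fact n * pmf (iter_shuffle_pmf n al be ga k) r"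
    by simp
  also have "\<dots> \<le> 1 - fact n * f r" using B by (simp add: mult_left_mono)
  finally show ?thesis using A by linarith
qed

end

theorem theorem7p1:
  fixes al be :: "nat \<Rightarrow> real" and ga A B :: real and n k :: nat
  assumes "ga \<ge> 0"
    and "\<And>i. i \<ge> 1 \<Longrightarrow> al i \<ge> 0"
    and "\<And>i. i \<ge> 1 \<Longrightarrow> be i \<ge> 0"
    and "(al has_sum A) {1..}"
    and "(be has_sum B) {1..}"
    and "ga + A + B = 1"
  shows "sep_dist n (iter_shuffle_pmf n al be ga k)
           \<le> real (n choose 2) *
             (infsum (\<lambda>i. (al i)\<^sup>2) {1..} + infsum (\<lambda>i. (be i)\<^sup>2) {1..}) ^ k"
proof -
  interpret L: letters al be ga A B
    by unfold_locales (use assms in auto)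
  let ?S = "{r. r permutes {1..n}}"
  have finS: "finite ?S" by (rule finite_permutations) simp
  have neS: "?S \<noteq> {}" using permutes_id by blast
  have "Max ((\<lambda>r. 1 - pmf (iter_shuffle_pmf n al be ga k) r / (1 / fact n)) ` ?S) \<le> real (n choose 2) * L.s2 ^ k"
    using finS neS L.main_bound by (simp add: Max_le_iff)
  then show ?thesis unfolding sep_dist_def L.s2_def .
qed

end
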